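(* Fix any total budget $\mathrm{TB}\in\mathbb N_0$. For every $k\in\mathbb N$, the disjunctive sum $1/2^k+1/2^k=1/2^{k-1}$.
   Context: Game forms are defined recursively: $G=\{G^{\mathcal L}\mid G^{\mathcal R}\}$ with finite sets of Left and Right options, and finite birthday. $0=\{\varnothing\mid\varnothing\}$, $1=\{0\mid\varnothing\}$. Dyadic game forms: $1/2^0=1$ and for $k\in\mathbb N$, $1/2^k=\{0\mid 1/2^{k-1}\}$. The budget set for total budget $\mathrm{TB}$ is $\mathcal B=\{0,\dots,\mathrm{TB},\hat 0,\dots,\widehat{\mathrm{TB}}\}$: state $p$ (resp. $\hat p$) means Left holds $p$ dollars and Right holds $\mathrm{TB}-p$, and Right (resp. Left) holds the tie-breaking marker. Play of $(G,\tilde p)$: at every position (terminal ones included) both players bid simultaneously, Left $\ell\in\{0,\dots,p\}$, Right $r\in\{0,\dots,\mathrm{TB}-p\}$. If Left holds the marker (state $\hat p$): if $\ell>r$ Left moves to $(G^L,\widehat{p-\ell})$, or, including the marker (allowed when $\ell\ge r$), to $(G^L,p-\ell)$; if $\ell=r$ Left wins, the marker passes to Right, play continues at $(G^L,p-\ell)$; if $\ell<r$ Right moves to $(G^R,\widehat{p+r})$. Symmetrically when Right holds the marker (state $p$): if $r>\ell$ Right moves to $(G^R,p+r)$ or, including the marker, to $(G^R,\widehat{p+r})$; if $r=\ell$ Right wins, the marker passes to Left, play continues at $(G^R,\widehat{p+r})$; if $r<\ell$ Left moves to $(G^L,p-\ell)$. A player who wins a bid but has no option loses. $o(G,\tilde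 p)\in\{\mathrm L,\mathrm R\}$ is the winner under optimal play; $\mathrm L>\mathrm R$. Disjunctive sum $G+H=\{G^{\mathcal L}+H,G+H^{\mathcal L}\mid G^{\mathcal R}+H,G+H^{\mathcal R}\}$. $G\ge H$ means $o(G+X,\tilde p)\ge o(H+X,\tilde p)$ for all game forms $X$ and all $\tilde p\in\mathcal B$; $G=H$ means $G\ge H$ and $H\ge G$. *)

theory Defs
  imports Main
begin

text \<open>Game forms: finite lists of Left and Right options (a list represents the
finite set of its elements; outcomes depend only on the set of options).\<close>
datatype game = Game "game list" "game list"

definition zero :: game where "zero = Game [] []"
definition one :: game where "one = Game [zero] []"

text \<open>Dyadic game forms: dy k = 1/2^k.\<close>
fun dy :: "nat \<Rightarrow> game" where
  "dy 0 = one"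
| "dy (Suc k) = Game [zero] [dy k]"

lemma size_mem_lt: "x \<in> set xs \<Longrightarrow> size x < Suc (size_list size xs + m) \<and> size x < Suc (m + size_list size xs)"
  by (induction xs) auto

function gplus :: "game \<Rightarrow> game \<Rightarrow> game" where
  "gplus (Game GL GR) (Game HL HR) =
     Game (map (\<lambda>g. gplus g (Game HL HR)) GL @ map (\<lambda>h. gplus (Game GL GR) h) HL)
          (map (\<lambda>g. gplus g (Game HL HR)) GR @ map (\<lambda>h. gplus (Game GL GR) h) HR)"
  by pat_completeness auto
termination
  by (relation "measure (\<lambda>(a,b). size a + size b)")
     (auto dest: size_mem_lt)

text \<open>lwins TB G p mk: Left wins (outcome L) from position (G, state) where Left holds
p dollars, Right holds TB - p; mk = True means Left holds the tie-breaking marker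
(state \<open>p-hat\<close>), mk = False means Right holds it (state p).
Left wins iff Left has a bid l such that for every Right bid r the resulting play is
won by Left; the winner of the bid chooses the option (and, where allowed, whether
to include the marker).  A bid winner without an option loses.\<close>
fun lwins :: "nat \<Rightarrow> game \<Rightarrow> nat \<Rightarrow> bool \<Rightarrow> bool" where
  "lwins TB (Game Ls Rs) p mk =
    (\<exists>l\<in>{0..p}. \<forall>r\<in>{0..TB - p}.
      (if mk then
         (if r < l then (\<exists>g\<in>set Ls. lwins TB g (p - l) True \<or> lwins TB g (p - l) False)
          else if l = r then (\<exists>g\<in>set Ls. lwins TB g (p - l) False)
          else (\<forall>g\<in>set Rs. lwins TB g (p + r) True))
       else
         (if l < r then (\<forall>g\<in>set Rs. lwins TB g (p + r) False \<and> lwins TB g (p + r) True)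
          else if l = r then (\<forall>g\<in>set Rs. lwins TB g (p + r) True)
          else (\<exists>g\<in>set Ls. lwins TB g (p - l) False))))"

datatype outcome = OR | OL

instantiation outcome :: linorder
begin
definition less_eq_outcome :: "outcome \<Rightarrow> outcome \<Rightarrow> bool" where
  "less_eq_outcome a b = (a = OR \<or> b = OL)"
definition less_outcome :: "outcome \<Rightarrow> outcome \<Rightarrow> bool" where
  "less_outcome a b = (a = OR \<and> b = OL)"
instance proof
  fix x y z :: outcome
  show "(x < y) = (x \<le> y \<and> \<not> y \<le> x)" "x \<le> x" "x \<le> y \<Longrightarrow> y \<le> z \<Longrightarrow> x \<le> z"
       "x \<le> y \<Longrightarrow> y \<le> x \<Longrightarrow> x = y" "x \<le> y \<or> y \<le> x"
    by (cases x; cases y; cases z; simp add: less_eq_outcome_def less_outcome_def)+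
qed
end

definition outc :: "nat \<Rightarrow> game \<Rightarrow> nat \<Rightarrow> bool \<Rightarrow> outcome" where
  "outc TB G p mk = (if lwins TB G p mk then OL else OR)"

definition game_ge :: "nat \<Rightarrow> game \<Rightarrow> game \<Rightarrow> bool" where
  "game_ge TB G H = (\<forall>X p mk. p \<le> TB \<longrightarrow> outc TB (gplus G X) p mk \<ge> outc TB (gplus H X) p mk)"

definition game_eq :: "nat \<Rightarrow> game \<Rightarrow> game \<Rightarrow> bool" where
  "game_eq TB G H = (game_ge TB G H \<and> game_ge TB H G)"

end

theory Submission
  imports Defs Complex_Main
begin

lemma gplus_zero_left: "gplus zero G = G"
proof (induction G)
  case (Game Ls Rs)
  have "map (gplus zero) Ls = Ls" using Game.IH(1) by (induction Ls) auto
  moreover have "map (gplus zero) Rs = Rs" using Game.IH(2) by (induction Rs) auto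
  ultimately show ?case by (simp add: zero_def)
qed

lemma gplus_zero_right: "gplus G zero = G"
proof (induction G)
  case (Game Ls Rs)
  have "map (\<lambda>g. gplus g zero) Ls = Ls" using Game.IH(1) by (induction Ls) auto
  moreover have "map (\<lambda>g. gplus g zero) Rs = Rs" using Game.IH(2) by (induction Rs) auto
  ultimately show ?case by (simp add: zero_def)
qed

lemma dy_eq: "dy a = Game [zero] (if a = 0 then [] else [dy (a - 1)])"
  by (cases a) (simp_all add: one_def)

fun ng :: "nat list \<Rightarrow> game" where
  "ng [] = zero"
| "ng [a] = dy a"
| "ng [a, b] = gplus (dy a) (dy b)"
| "ng _ = zero"

fun lo :: "nat list \<Rightarrow> nat list set" where
  "lo [] = {}"
| "lo [a] = {[]}"
| "lo [a, b] = {[b], [a]}"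
| "lo _ = {}"

fun ro :: "nat list \<Rightarrow> nat list set" where
  "ro [] = {}"
| "ro [a] = (if a = 0 then {} else {[a - 1]})"
| "ro [a, b] = (if a = 0 then {} else {[a - 1, b]}) \<union> (if b = 0 then {} else {[a, b - 1]})"
| "ro _ = {}"

fun gL :: "game \<Rightarrow> game list" where "gL (Game L R) = L"
fun gR :: "game \<Rightarrow> game list" where "gR (Game L R) = R"

lemma gplus_eq: "gplus G H = Game (map (\<lambda>g. gplus g H) (gL G) @ map (gplus G) (gL H)) (map (\<lambda>g. gplus g H) (gR G) @ map (gplus G) (gR H))"
  by (cases G; cases H) simp

lemma gL_dy: "gL (dy a) = [zero]" by (cases a) (simp_all add: one_def)
lemma gR_dy: "gR (dy a) = (if a = 0 then [] else [dy (a - 1)])" by (cases a) (simp_all add: one_def)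

lemma len2_cases: "length xs \<le> 2 \<Longrightarrow> xs = [] \<or> (\<exists>a. xs = [a]) \<or> (\<exists>a b. xs = [a, b])"
  by (cases xs; cases "tl xs"; auto)

lemma opts_ng: "length xs \<le> 2 \<Longrightarrow> \<exists>NL NR. ng xs = Game NL NR \<and> set NL = ng ` lo xs \<and> set NR = ng ` ro xs"
proof -
  assume "length xs \<le> 2"
  then consider "xs = []" | a where "xs = [a]" | a b where "xs = [a, b]" using len2_cases by blast
  then show ?thesis
  proof cases
    case 1 then show ?thesis by (simp add: zero_def)
  next
    case (2 a)
    have "ng xs = Game [zero] (if a = 0 then [] else [dy (a - 1)])" using 2 by (simp flip: dy_eq)
    then show ?thesis using 2 by auto
  next
    case (3 a b)
    have "gplus (dy a) (dy b) = Game [dy b, dy a] ((if a = 0 then [] else [gplus (dy (a - 1)) (dy b)]) @ (if b = 0 then [] else [gplus (dy a) (dy (b - 1))]))"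
      by (subst gplus_eq) (simp add: gL_dy gR_dy gplus_zero_left gplus_zero_right)
    then show ?thesis using 3 by auto
  qed
qed

lemma size_opt_L: "g \<in> set Ls \<Longrightarrow> size g < size (Game Ls Rs)"
  using size_mem_lt[of g Ls "size_list size Rs"] by simp

lemma size_opt_R: "g \<in> set Rs \<Longrightarrow> size g < size (Game Ls Rs)"
  using size_mem_lt[of g Rs "size_list size Ls"] by simp

lemma size_lo: "length xs \<le> 2 \<Longrightarrow> z \<in> lo xs \<Longrightarrow> size (ng z) < size (ng xs)"
  using opts_ng[of xs] size_opt_L by fastforce

lemma size_ro: "length xs \<le> 2 \<Longrightarrow> z \<in> ro xs \<Longrightarrow> size (ng z) < size (ng xs)"
  using opts_ng[of xs] size_opt_R by fastforce

definition lwin :: "bool \<Rightarrow> nat \<Rightarrow> nat \<Rightarrow> bool" where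
  "lwin mk l r = (if mk then r \<le> l else r < l)"
definition LSt :: "nat \<Rightarrow> bool \<Rightarrow> nat \<Rightarrow> nat \<Rightarrow> (nat \<times> bool) set" where
  "LSt p mk l r = (if mk \<and> r < l then {(p - l, True), (p - l, False)} else {(p - l, False)})"
definition RSt :: "nat \<Rightarrow> bool \<Rightarrow> nat \<Rightarrow> nat \<Rightarrow> (nat \<times> bool) set" where
  "RSt p mk l r = (if \<not> mk \<and> l < r then {(p + r, False), (p + r, True)} else {(p + r, True)})"

definition W :: "nat \<Rightarrow> game set \<Rightarrow> game set \<Rightarrow> nat \<Rightarrow> bool \<Rightarrow> bool" where
  "W TB LS RS p mk = (\<exists>l\<in>{0..p}. \<forall>r\<in>{0..TB - p}.
     if lwin mk l r then (\<exists>g\<in>LS. \<exists>s\<in>LSt p mk l r. lwins TB g (fst s) (snd s))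
     else (\<forall>g\<in>RS. \<forall>s\<in>RSt p mk l r. lwins TB g (fst s) (snd s)))"

lemma lwins_W: "lwins TB (Game Ls Rs) p mk = W TB (set Ls) (set Rs) p mk"
  unfolding W_def lwins.simps[of TB Ls Rs p mk]
  apply (intro bex_cong ball_cong refl)
  apply (auto simp: lwin_def LSt_def RSt_def)
  done

definition LOS :: "nat list \<Rightarrow> game list \<Rightarrow> game list \<Rightarrow> game set" where
  "LOS xs YL YR = (\<lambda>z. gplus (ng z) (Game YL YR)) ` lo xs \<union> gplus (ng xs) ` set YL"
definition ROS :: "nat list \<Rightarrow> game list \<Rightarrow> game list \<Rightarrow> game set" where
  "ROS xs YL YR = (\<lambda>z. gplus (ng z) (Game YL YR)) ` ro xs \<union> gplus (ng xs) ` set YR"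

lemma lw_sum: "length xs \<le> 2 \<Longrightarrow> lwins TB (gplus (ng xs) (Game YL YR)) p mk = W TB (LOS xs YL YR) (ROS xs YL YR) p mk"
proof -
  assume "length xs \<le> 2"
  then obtain NL NR where N: "ng xs = Game NL NR" "set NL = ng ` lo xs" "set NR = ng ` ro xs"
    using opts_ng by blast
  show ?thesis
    unfolding N(1) gplus.simps lwins_W LOS_def ROS_def
    by (simp add: N(2,3) image_image flip: N(1))
qed


definition v :: "nat list \<Rightarrow> real" where
  "v xs = sum_list (map (\<lambda>x. (1/2::real) ^ x) xs)"

lemma v_simps[simp]: "v [] = 0" "v [a] = (1/2)^a" "v [a, b] = (1/2)^a + (1/2)^b"
  by (simp_all add: v_def)

lemma hp_pos: "(0::real) < (1/2)^a" by simp

lemma hp_le: "((1/2::real)^a \<le> (1/2)^b) = (b \<le> a)"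
  by (simp add: power_decreasing_iff)

lemma hp_lt: "((1/2::real)^a < (1/2)^b) = (b < a)"
  by (simp add: power_strict_decreasing_iff)

lemma hp_Suc: "(1/2::real)^(Suc a) = (1/2)^a / 2" by simp

lemma hp_pred: "a \<ge> 1 \<Longrightarrow> (1/2::real)^(a - 1) = 2 * (1/2)^a"
  by (cases a) auto

lemma v_nonneg: "length xs \<le> 2 \<Longrightarrow> 0 \<le> v xs"
  using len2_cases[of xs] by (auto simp: add_nonneg_nonneg)

lemma v_pos: "length xs \<le> 2 \<Longrightarrow> xs \<noteq> [] \<Longrightarrow> 0 < v xs"
  using len2_cases[of xs] by (auto simp: add_pos_pos)

lemma lo_len: "z \<in> lo xs \<Longrightarrow> length xs \<le> 2 \<Longrightarrow> length z < length xs"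
  using len2_cases[of xs] by auto

lemma ro_len: "z \<in> ro xs \<Longrightarrow> length xs \<le> 2 \<Longrightarrow> length z = length xs"
  using len2_cases[of xs] by (auto split: if_splits)

lemma lo_v: "z \<in> lo xs \<Longrightarrow> length xs \<le> 2 \<Longrightarrow> v z < v xs"
  using len2_cases[of xs] by auto

lemma ro_v: "z \<in> ro xs \<Longrightarrow> length xs \<le> 2 \<Longrightarrow> v xs < v z"
  using len2_cases[of xs] by (auto split: if_splits simp: hp_lt)

lemma lo_ne: "length xs \<le> 2 \<Longrightarrow> xs \<noteq> [] \<Longrightarrow> \<exists>z. z \<in> lo xs"
  using len2_cases[of xs] by auto

lemma lo_single: "lo [j] = {[]}" by simp

lemma NA: assumes "length xs \<le> 1" "length ys \<le> 2" "v xs \<le> v ys" "z \<in> ro ys"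
  shows "(\<exists>w\<in>lo z. v xs \<le> v w) \<or> (\<exists>x'\<in>ro xs. v x' \<le> v z)"
proof (cases xs)
  case Nil
  have "length z \<le> 2" "z \<noteq> []" using ro_len[OF assms(4,2)] assms(4) len2_cases[of ys] assms(2) by (auto split: if_splits)
  then obtain w where "w \<in> lo z" using lo_ne by blast
  moreover have "length w \<le> 2" using lo_len[OF \<open>w \<in> lo z\<close>] \<open>length z \<le> 2\<close> by simp
  ultimately show ?thesis using Nil v_nonneg by auto
next
  case (Cons j t)
  then have xs: "xs = [j]" using assms(1) by auto
  consider a where "ys = [a]" | a b where "ys = [a, b]" | "ys = []" using len2_cases[OF assms(2)] by blast
  then show ?thesis
  proof cases
    case (1 a)
    then have "a \<ge> 1" "z = [a - 1]" using assms(4) by (auto split: if_splits)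
    have "a \<le> j" using assms(3) xs 1 by (simp add: hp_le)
    then have "j \<ge> 1" "[j - 1] \<in> ro xs" using \<open>a \<ge> 1\<close> xs by auto
    moreover have "v [j - 1] \<le> v z" using \<open>z = [a - 1]\<close> \<open>a \<le> j\<close> \<open>a \<ge> 1\<close> by (simp add: hp_le)
    ultimately show ?thesis by blast
  next
    case (2 a b)
    have key: "\<And>c d. (1/2::real)^j \<le> (1/2)^c + (1/2)^d \<Longrightarrow> c \<ge> 1 \<Longrightarrow>
       (\<exists>w\<in>lo [c - 1, d]. v xs \<le> v w) \<or> (\<exists>x'\<in>ro xs. v x' \<le> v [c - 1, d])"
    proof -
      fix c d assume h: "(1/2::real)^j \<le> (1/2)^c + (1/2)^d" "c \<ge> 1"
      show "(\<exists>w\<in>lo [c - 1, d]. v xs \<le> v w) \<or> (\<exists>x'\<in>ro xs. v x' \<le> v [c - 1, d])"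
      proof (cases "d \<le> j \<or> c - 1 \<le> j")
        case True
        then show ?thesis using xs by (auto simp: hp_le)
      next
        case False
        then have "j + 2 \<le> c" "j + 1 \<le> d" by auto
        then have "(1/2::real)^c \<le> (1/2)^(j+2)" "(1/2::real)^d \<le> (1/2)^(j+1)" by (simp_all only: hp_le)
        then have "(1/2::real)^c + (1/2)^d \<le> (1/2)^j * (3/4)" by (simp add: power_add)
        moreover have "(1/2::real)^j * (3/4) < (1/2)^j" by simp
        ultimately show ?thesis using h by linarith
      qed
    qed
    have vv: "(1/2::real)^j \<le> (1/2)^a + (1/2)^b" using assms(3) xs 2 by simp
    from assms(4) 2 consider "a \<ge> 1" "z = [a - 1, b]" | "b \<ge> 1" "z = [a, b - 1]" by (auto split: if_splits)
    then show ?thesis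
    proof cases
      case 1
      then show ?thesis using key[OF vv] by simp
    next
      case 2
      have vv': "(1/2::real)^j \<le> (1/2)^b + (1/2)^a" using vv by simp
      have "lo [a, b - 1] = lo [b - 1, a]" "v [a, b - 1] = v [b - 1, a]" by auto
      then show ?thesis using key[OF vv' 2(1)] 2(2) by (auto simp: add.commute)
    qed
  next
    case 3 then show ?thesis using assms(4) by simp
  qed
qed

lemma NB: assumes "xs = [j]" "x' \<in> ro xs" "v ys \<le> v xs" "ys \<noteq> []" "length ys \<le> 2"
  shows "\<exists>z\<in>ro ys. v z \<le> v x'"
proof -
  have j: "j \<ge> 1" "x' = [j - 1]" using assms(1,2) by (auto split: if_splits)
  have vx: "v x' = 2 * (1/2)^j" using j by (cases j) auto
  consider a where "ys = [a]" | a b where "ys = [a, b]" using len2_cases[OF assms(5)] assms(4) by blast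
  then show ?thesis
  proof cases
    case (1 a)
    then have "j \<le> a" using assms(3,1) by (simp add: hp_le)
    then have "a \<ge> 1" "[a - 1] \<in> ro ys" using j 1 by auto
    moreover have "v [a - 1] \<le> v x'" using \<open>j \<le> a\<close> j by (simp add: hp_le)
    ultimately show ?thesis by blast
  next
    case (2 a b)
    have h: "(1/2::real)^a + (1/2)^b \<le> (1/2)^j" using assms(3,1) 2 by simp
    then have "(1/2::real)^a < (1/2)^j" using hp_pos[of b] by linarith
    then have "j < a" by (simp add: hp_lt)
    then have "a \<ge> 1" "[a - 1, b] \<in> ro ys" using 2 by auto
    moreover have "v [a - 1, b] \<le> v x'" using hp_pred[OF \<open>a \<ge> 1\<close>] h vx hp_pos[of b] by (simp only: v_simps)
    ultimately show ?thesis by blast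
  qed
qed

lemma NC: assumes "xs = [j]" "v ys \<le> v xs" "z \<in> lo ys" "z \<noteq> []" "length ys \<le> 2"
  shows "\<exists>w\<in>ro z. v w \<le> v xs"
proof -
  consider a where "ys = [a]" | a b where "ys = [a, b]" | "ys = []" using len2_cases[OF assms(5)] by blast
  then show ?thesis
  proof cases
    case (1 a) then show ?thesis using assms(3,4) by simp
  next
    case 3 then show ?thesis using assms(3) by simp
  next
    case (2 a b)
    have h: "(1/2::real)^a + (1/2)^b \<le> (1/2)^j" using assms(2,1) 2 by simp
    have gen: "\<And>c d. (1/2::real)^c + (1/2)^d \<le> (1/2)^j \<Longrightarrow> \<exists>w\<in>ro [d]. v w \<le> v xs"
    proof -
      fix c d assume hh: "(1/2::real)^c + (1/2)^d \<le> (1/2)^j"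
      then have "(1/2::real)^d < (1/2)^j" using hp_pos[of c] by linarith
      then have "j < d" by (simp add: hp_lt)
      then have "d \<ge> 1" "[d - 1] \<in> ro [d]" by auto
      moreover have "v [d - 1] \<le> v xs" using \<open>j < d\<close> assms(1) by (simp add: hp_le)
      ultimately show "\<exists>w\<in>ro [d]. v w \<le> v xs" by blast
    qed
    from assms(3) 2 have "z = [b] \<or> z = [a]" by auto
    then show ?thesis
    proof
      assume "z = [b]" then show ?thesis using gen[OF h] by simp
    next
      assume "z = [a]" then show ?thesis using gen[of b a] h by (simp add: add.commute)
    qed
  qed
qed


definition PR :: "nat list \<Rightarrow> nat \<Rightarrow> bool \<Rightarrow> nat list \<Rightarrow> nat \<Rightarrow> bool \<Rightarrow> bool" where
  "PR xs p1 m1 ys p2 m2 = (v xs \<le> v ys \<and> p1 \<le> p2 \<and> (p1 = p2 \<longrightarrow> m1 \<longrightarrow> m2) \<and>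
      (\<not> m1 \<and> m2 \<longrightarrow> (\<exists>w\<in>lo ys. v xs \<le> v w)))"

lemma side_PR:
  assumes "length xs \<le> 1" "length ys \<le> 2" "v xs \<le> v ys" "z \<in> ro ys"
    "p1 \<le> q2" "p1 = q2 \<longrightarrow> m1 \<longrightarrow> n" "q1 \<le> q2" "\<not> m1 \<and> n \<longrightarrow> n1 = n"
  shows "PR xs p1 m1 z q2 n \<or> (\<exists>x'\<in>ro xs. PR x' q1 n1 z q2 n)"
proof -
  have vz: "v ys < v z" using ro_v[OF assms(4,2)] .
  show ?thesis
  proof (cases "\<not> m1 \<and> n")
    case False
    then show ?thesis using assms vz unfolding PR_def by auto
  next
    case True
    from NA[OF assms(1-4)] show ?thesis
    proof
      assume "\<exists>w\<in>lo z. v xs \<le> v w"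
      then show ?thesis using assms vz unfolding PR_def by auto
    next
      assume "\<exists>x'\<in>ro xs. v x' \<le> v z"
      then show ?thesis using assms True unfolding PR_def by auto
    qed
  qed
qed

lemma exI2: "\<exists>g\<in>A. P g a b \<Longrightarrow> (a, b) \<in> S \<Longrightarrow> \<exists>g\<in>A. \<exists>s\<in>S. P g (fst s) (snd s)"
  by force

lemma lo_sub: "length xs \<le> 1 \<Longrightarrow> z \<in> lo xs \<Longrightarrow> z = [] \<and> (\<exists>j. xs = [j])"
  by (cases xs) auto

lemma PL_aux:
  "size Y + size (ng xs) + size (ng ys) = N \<Longrightarrow> length xs \<le> 1 \<Longrightarrow> length ys \<le> 2 \<Longrightarrow> p2 \<le> TB \<Longrightarrow>
   PR xs p1 m1 ys p2 m2 \<Longrightarrow> lwins TB (gplus (ng xs) Y) p1 m1 \<Longrightarrow> lwins TB (gplus (ng ys) Y) p2 m2"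
proof (induction N arbitrary: Y xs ys p1 m1 p2 m2 rule: less_induct)
  case (less N Y xs ys p1 m1 p2 m2)
  have IH: "\<And>Y' xs' ys' q1 n1 q2 n2. size Y' + size (ng xs') + size (ng ys') < size Y + size (ng xs) + size (ng ys) \<Longrightarrow>
     length xs' \<le> 1 \<Longrightarrow> length ys' \<le> 2 \<Longrightarrow> q2 \<le> TB \<Longrightarrow> PR xs' q1 n1 ys' q2 n2 \<Longrightarrow>
     lwins TB (gplus (ng xs') Y') q1 n1 \<Longrightarrow> lwins TB (gplus (ng ys') Y') q2 n2"
    using less.IH less.prems(1) by blast
  obtain YL YR where Y: "Y = Game YL YR" by (cases Y)
  have lx: "length xs \<le> 1" and lx2: "length xs \<le> 2" and ly: "length ys \<le> 2" and p2TB: "p2 \<le> TB"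
    using less.prems by auto
  have P: "PR xs p1 m1 ys p2 m2" using less.prems by simp
  then have vxy: "v xs \<le> v ys" and p12: "p1 \<le> p2" and c3: "p1 = p2 \<longrightarrow> m1 \<longrightarrow> m2"
    and c4: "\<not> m1 \<and> m2 \<longrightarrow> (\<exists>w\<in>lo ys. v xs \<le> v w)" unfolding PR_def by auto
  have src: "lwins TB (gplus (ng xs) (Game YL YR)) p1 m1" using less.prems Y by simp
  have sizeYL: "\<And>y. y \<in> set YL \<Longrightarrow> size y < size Y" using Y size_opt_L by blast
  have sizeYR: "\<And>y. y \<in> set YR \<Longrightarrow> size y < size Y" using Y size_opt_R by blast

  have LT: "\<And>q1 n1 q2 n2. PR xs q1 n1 ys q2 n2 \<Longrightarrow> (n2 \<longrightarrow> n1) \<Longrightarrow> q2 \<le> TB \<Longrightarrow>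
      (\<exists>g\<in>LOS xs YL YR. lwins TB g q1 n1) \<Longrightarrow> (\<exists>g\<in>LOS ys YL YR. lwins TB g q2 n2)"
  proof -
    fix q1 n1 q2 n2
    assume pr: "PR xs q1 n1 ys q2 n2" and nn: "n2 \<longrightarrow> n1" and q2: "q2 \<le> TB"
      and ex: "\<exists>g\<in>LOS xs YL YR. lwins TB g q1 n1"
    then obtain g where g: "g \<in> LOS xs YL YR" "lwins TB g q1 n1" by blast
    from g(1)[unfolded LOS_def] show "\<exists>g\<in>LOS ys YL YR. lwins TB g q2 n2"
    proof (elim UnE imageE)
      fix z assume z: "z \<in> lo xs" and gz: "g = gplus (ng z) (Game YL YR)"
      obtain j where xsj: "xs = [j]" and z0: "z = []" using lo_sub[OF lx z] by blast
      have "0 < v xs" using xsj by simp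
      then have "ys \<noteq> []" using vxy by auto
      then obtain z' where z': "z' \<in> lo ys" using lo_ne[OF ly] by blast
      have lz': "length z' \<le> 2" using lo_len[OF z' ly] ly by simp
      have "PR z q1 n1 z' q2 n2" using pr nn z0 v_nonneg[OF lz'] unfolding PR_def by auto
      moreover have "size Y + size (ng z) + size (ng z') < size Y + size (ng xs) + size (ng ys)"
        using size_lo[OF lx2 z] size_lo[OF ly z'] by simp
      ultimately have "lwins TB (gplus (ng z') Y) q2 n2"
        using IH[of Y z z' q2 q1 n1 n2] g(2) gz Y z0 lz' q2 by simp
      then show ?thesis using z' Y unfolding LOS_def by blast
    next
      fix y assume y: "y \<in> set YL" and gy: "g = gplus (ng xs) y"
      have "lwins TB (gplus (ng ys) y) q2 n2"
        using IH[of y xs ys q2 q1 n1 n2] sizeYL[OF y] lx ly q2 pr g(2) gy by simp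
      then show ?thesis using y unfolding LOS_def by blast
    qed
  qed

  have RT: "\<And>q1 n1 q2 n2. PR xs q1 n1 ys q2 n2 \<Longrightarrow> q2 \<le> TB \<Longrightarrow>
      (\<And>z. z \<in> ro ys \<Longrightarrow> PR xs p1 m1 z q2 n2 \<or> (\<exists>x'\<in>ro xs. PR x' q1 n1 z q2 n2)) \<Longrightarrow>
      (\<forall>g\<in>ROS xs YL YR. lwins TB g q1 n1) \<Longrightarrow> (\<forall>g\<in>ROS ys YL YR. lwins TB g q2 n2)"
  proof -
    fix q1 n1 q2 n2
    assume pr: "PR xs q1 n1 ys q2 n2" and q2: "q2 \<le> TB"
      and side: "\<And>z. z \<in> ro ys \<Longrightarrow> PR xs p1 m1 z q2 n2 \<or> (\<exists>x'\<in>ro xs. PR x' q1 n1 z q2 n2)"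
      and all: "\<forall>g\<in>ROS xs YL YR. lwins TB g q1 n1"
    show "\<forall>g\<in>ROS ys YL YR. lwins TB g q2 n2"
    proof
      fix g assume "g \<in> ROS ys YL YR"
      then show "lwins TB g q2 n2"
        unfolding ROS_def
      proof (elim UnE imageE)
        fix z assume z: "z \<in> ro ys" and gz: "g = gplus (ng z) (Game YL YR)"
        have lz: "length z \<le> 2" using ro_len[OF z ly] ly by simp
        have sz: "size (ng z) < size (ng ys)" using size_ro[OF ly z] .
        from side[OF z] show ?thesis
        proof
          assume "PR xs p1 m1 z q2 n2"
          then show ?thesis using IH[of Y xs z q2 p1 m1 n2] sz lx lz q2 less.prems(6) gz Y by simp
        next
          assume "\<exists>x'\<in>ro xs. PR x' q1 n1 z q2 n2"
          then obtain x' where x': "x' \<in> ro xs" "PR x' q1 n1 z q2 n2" by blast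
          have lx': "length x' \<le> 1" using ro_len[OF x'(1) lx2] lx by simp
          have sx: "size (ng x') < size (ng xs)" using size_ro[OF lx2 x'(1)] .
          have "lwins TB (gplus (ng x') (Game YL YR)) q1 n1" using all x'(1) unfolding ROS_def by auto
          then show ?thesis using IH[of Y x' z q2 q1 n1 n2] sz sx lx' lz q2 x'(2) gz Y by simp
        qed
      next
        fix y assume y: "y \<in> set YR" and gy: "g = gplus (ng ys) y"
        have "lwins TB (gplus (ng xs) y) q1 n1" using all y unfolding ROS_def by auto
        then show ?thesis using IH[of y xs ys q2 q1 n1 n2] sizeYR[OF y] lx ly q2 pr gy by simp
      qed
    qed
  qed

  from src[unfolded lw_sum[OF lx2] W_def] obtain l1 where l1: "l1 \<in> {0..p1}" and
    H1: "\<forall>r\<in>{0..TB - p1}. if lwin m1 l1 r then (\<exists>g\<in>LOS xs YL YR. \<exists>s\<in>LSt p1 m1 l1 r. lwins TB g (fst s) (snd s))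
          else (\<forall>g\<in>ROS xs YL YR. \<forall>s\<in>RSt p1 m1 l1 r. lwins TB g (fst s) (snd s))" by blast
  have l1p: "l1 \<le> p1" using l1 by simp
  have goal: "lwins TB (gplus (ng ys) (Game YL YR)) p2 m2"
    unfolding lw_sum[OF ly] W_def
  proof (rule bexI[of _ l1], rule ballI)
    show "l1 \<in> {0..p2}" using l1p p12 by simp
    fix r assume "r \<in> {0..TB - p2}"
    then have r: "r \<le> TB - p2" by simp
    have Hr: "\<And>r1. r1 \<le> TB - p1 \<Longrightarrow> (if lwin m1 l1 r1 then (\<exists>g\<in>LOS xs YL YR. \<exists>s\<in>LSt p1 m1 l1 r1. lwins TB g (fst s) (snd s))
          else (\<forall>g\<in>ROS xs YL YR. \<forall>s\<in>RSt p1 m1 l1 r1. lwins TB g (fst s) (snd s)))" using H1 by simp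
    have rp1: "r \<le> TB - p1" using r p12 by simp
    have q2TB: "p2 + r \<le> TB" using r p2TB by simp
    show "if lwin m2 l1 r then (\<exists>g\<in>LOS ys YL YR. \<exists>s\<in>LSt p2 m2 l1 r. lwins TB g (fst s) (snd s))
          else (\<forall>g\<in>ROS ys YL YR. \<forall>s\<in>RSt p2 m2 l1 r. lwins TB g (fst s) (snd s))"
    proof (cases "m1 = m2")
      case True
      show ?thesis
      proof (cases "lwin m2 l1 r")
        case lw: True
        have "lwin m1 l1 r" using lw True by simp
        then have "\<exists>g\<in>LOS xs YL YR. \<exists>s\<in>LSt p1 m1 l1 r. lwins TB g (fst s) (snd s)" using Hr[OF rp1] by simp
        then obtain g s where g: "g \<in> LOS xs YL YR" "s \<in> LSt p1 m1 l1 r" "lwins TB g (fst s) (snd s)" by blast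
        obtain n where s: "s = (p1 - l1, n)" and s2: "(p2 - l1, n) \<in> LSt p2 m2 l1 r"
          using g(2) True by (auto simp: LSt_def split: if_splits)
        have pr: "PR xs (p1 - l1) n ys (p2 - l1) n" using vxy l1p p12 unfolding PR_def by auto
        have E: "\<exists>g\<in>LOS xs YL YR. lwins TB g (p1 - l1) n" using g(1,3) s by auto
        have "\<exists>g\<in>LOS ys YL YR. lwins TB g (p2 - l1) n" by (rule LT[OF pr _ _ E]) (use p2TB in auto)
        then show ?thesis using lw exI2[OF _ s2] by simp
      next
        case rw: False
        have "\<not> lwin m1 l1 r" using rw True by simp
        then have A: "\<forall>g\<in>ROS xs YL YR. \<forall>s\<in>RSt p1 m1 l1 r. lwins TB g (fst s) (snd s)" using Hr[OF rp1] by simp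
        have "\<forall>g\<in>ROS ys YL YR. \<forall>s\<in>RSt p2 m2 l1 r. lwins TB g (fst s) (snd s)"
        proof (intro ballI)
          fix g s assume g: "g \<in> ROS ys YL YR" and s: "s \<in> RSt p2 m2 l1 r"
          obtain n where sn: "s = (p2 + r, n)" and s1: "(p1 + r, n) \<in> RSt p1 m1 l1 r" and mn: "m1 \<longrightarrow> n"
            using s True by (auto simp: RSt_def split: if_splits)
          have pr: "PR xs (p1 + r) n ys (p2 + r) n" using vxy p12 unfolding PR_def by auto
          have side: "\<And>z. z \<in> ro ys \<Longrightarrow> PR xs p1 m1 z (p2 + r) n \<or> (\<exists>x'\<in>ro xs. PR x' (p1 + r) n z (p2 + r) n)"
            using side_PR[OF lx ly vxy] p12 mn by simp
          have "\<forall>g\<in>ROS xs YL YR. lwins TB g (p1 + r) n" using A s1 by fastforce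
          then have "\<forall>g\<in>ROS ys YL YR. lwins TB g (p2 + r) n" using RT[OF pr q2TB side] by blast
          then show "lwins TB g (fst s) (snd s)" using g sn by auto
        qed
        then show ?thesis using rw by simp
      qed
    next
      case False
      then consider "m1" "\<not> m2" | "\<not> m1" "m2" by auto
      then show ?thesis
      proof cases
        case 1
        have p12s: "p1 < p2" using c3 1 p12 by auto
        consider "r < l1" | "r = l1" | "l1 < r" by linarith
        then show ?thesis
        proof cases
          case a: 1
          have lw2: "lwin m2 l1 r" using a 1 by (simp add: lwin_def)
          have "lwin m1 l1 r" using a 1 by (simp add: lwin_def)
          then have "\<exists>g\<in>LOS xs YL YR. \<exists>s\<in>LSt p1 m1 l1 r. lwins TB g (fst s) (snd s)" using Hr[OF rp1] by simp
          then obtain g s where g: "g \<in> LOS xs YL YR" "s \<in> LSt p1 m1 l1 r" "lwins TB g (fst s) (snd s)" by blast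
          obtain n where s: "s = (p1 - l1, n)" using g(2) by (auto simp: LSt_def split: if_splits)
          have pr: "PR xs (p1 - l1) n ys (p2 - l1) False" using vxy l1p p12s unfolding PR_def by auto
          have E: "\<exists>g\<in>LOS xs YL YR. lwins TB g (p1 - l1) n" using g(1,3) s by auto
          have "\<exists>g\<in>LOS ys YL YR. lwins TB g (p2 - l1) False" by (rule LT[OF pr _ _ E]) (use p2TB in auto)
          moreover have "(p2 - l1, False) \<in> LSt p2 m2 l1 r" using 1 by (simp add: LSt_def)
          ultimately have "\<exists>g\<in>LOS ys YL YR. \<exists>s\<in>LSt p2 m2 l1 r. lwins TB g (fst s) (snd s)" by (rule exI2)
          then show ?thesis using lw2 by simp
        next
          case b: 2
          have lw2: "\<not> lwin m2 l1 r" using b 1 by (simp add: lwin_def)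
          have r1: "l1 + 1 \<le> TB - p1" using b r p12s p2TB by arith
          have "\<not> lwin m1 l1 (l1 + 1)" using 1 by (simp add: lwin_def)
          then have A: "\<forall>g\<in>ROS xs YL YR. \<forall>s\<in>RSt p1 m1 l1 (l1 + 1). lwins TB g (fst s) (snd s)" using Hr[OF r1] by simp
          then have A': "\<forall>g\<in>ROS xs YL YR. lwins TB g (p1 + (l1 + 1)) True" using 1 by (simp add: RSt_def)
          have pr: "PR xs (p1 + (l1 + 1)) True ys (p2 + r) True" using vxy p12s b unfolding PR_def by auto
          have side: "\<And>z. z \<in> ro ys \<Longrightarrow> PR xs p1 m1 z (p2 + r) True \<or> (\<exists>x'\<in>ro xs. PR x' (p1 + (l1 + 1)) True z (p2 + r) True)"
            using side_PR[OF lx ly vxy] p12s b 1 by simp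
          have "\<forall>g\<in>ROS ys YL YR. lwins TB g (p2 + r) True" using RT[OF pr q2TB side A'] .
          moreover have "RSt p2 m2 l1 r = {(p2 + r, True)}" using 1 b by (simp add: RSt_def)
          ultimately show ?thesis using lw2 by auto
        next
          case c: 3
          have lw2: "\<not> lwin m2 l1 r" using c 1 by (simp add: lwin_def)
          have "\<not> lwin m1 l1 r" using c 1 by (simp add: lwin_def)
          then have A: "\<forall>g\<in>ROS xs YL YR. \<forall>s\<in>RSt p1 m1 l1 r. lwins TB g (fst s) (snd s)" using Hr[OF rp1] by simp
          then have A': "\<forall>g\<in>ROS xs YL YR. lwins TB g (p1 + r) True" using 1 by (simp add: RSt_def)
          have "\<forall>g\<in>ROS ys YL YR. lwins TB g (p2 + r) n" for n
          proof -
            have pr: "PR xs (p1 + r) True ys (p2 + r) n" using vxy p12s unfolding PR_def by auto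
            have side: "\<And>z. z \<in> ro ys \<Longrightarrow> PR xs p1 m1 z (p2 + r) n \<or> (\<exists>x'\<in>ro xs. PR x' (p1 + r) True z (p2 + r) n)"
              using side_PR[OF lx ly vxy] p12s 1 by simp
            show ?thesis using RT[OF pr q2TB side A'] .
          qed
          moreover have "\<forall>s\<in>RSt p2 m2 l1 r. fst s = p2 + r" by (auto simp: RSt_def)
          ultimately show ?thesis using lw2 by (metis prod.collapse)
        qed
      next
        case 2
        obtain w where w: "w \<in> lo ys" "v xs \<le> v w" using c4 2 by auto
        consider "r < l1" | "r = l1" "0 < l1" | "r = l1" "l1 = 0" | "l1 < r" by linarith
        then show ?thesis
        proof cases
          case a: 1
          have lw2: "lwin m2 l1 r" using a 2 by (simp add: lwin_def)
          have "lwin m1 l1 r" using a 2 by (simp add: lwin_def)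
          then have "\<exists>g\<in>LOS xs YL YR. \<exists>s\<in>LSt p1 m1 l1 r. lwins TB g (fst s) (snd s)" using Hr[OF rp1] by simp
          then have E: "\<exists>g\<in>LOS xs YL YR. lwins TB g (p1 - l1) False" using 2 by (simp add: LSt_def)
          have "PR xs (p1 - l1) False ys (p2 - l1) False" using vxy l1p p12 unfolding PR_def by auto
          then have "\<exists>g\<in>LOS ys YL YR. lwins TB g (p2 - l1) False" by (rule LT[OF _ _ _ E]) (use p2TB in auto)
          moreover have "(p2 - l1, False) \<in> LSt p2 m2 l1 r" using a 2 by (simp add: LSt_def)
          ultimately have "\<exists>g\<in>LOS ys YL YR. \<exists>s\<in>LSt p2 m2 l1 r. lwins TB g (fst s) (snd s)" by (rule exI2)
          then show ?thesis using lw2 by simp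
        next
          case b: 2
          have lw2: "lwin m2 l1 r" using b 2 by (simp add: lwin_def)
          have r1: "l1 - 1 \<le> TB - p1" using rp1 b by simp
          have "lwin m1 l1 (l1 - 1)" using b 2 by (simp add: lwin_def)
          then have "\<exists>g\<in>LOS xs YL YR. \<exists>s\<in>LSt p1 m1 l1 (l1 - 1). lwins TB g (fst s) (snd s)" using Hr[OF r1] by simp
          then have E: "\<exists>g\<in>LOS xs YL YR. lwins TB g (p1 - l1) False" using 2 by (simp add: LSt_def)
          have "PR xs (p1 - l1) False ys (p2 - l1) False" using vxy l1p p12 unfolding PR_def by auto
          then have "\<exists>g\<in>LOS ys YL YR. lwins TB g (p2 - l1) False" by (rule LT[OF _ _ _ E]) (use p2TB in auto)
          moreover have "(p2 - l1, False) \<in> LSt p2 m2 l1 r" using b 2 by (simp add: LSt_def)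
          ultimately have "\<exists>g\<in>LOS ys YL YR. \<exists>s\<in>LSt p2 m2 l1 r. lwins TB g (fst s) (snd s)" by (rule exI2)
          then show ?thesis using lw2 by simp
        next
          case c: 3
          have lw2: "lwin m2 l1 r" using c 2 by (simp add: lwin_def)
          have lw': "length w \<le> 2" using lo_len[OF w(1) ly] ly by simp
          have "PR xs p1 m1 w p2 False" using w(2) p12 2 unfolding PR_def by auto
          then have "lwins TB (gplus (ng w) Y) p2 False"
            using IH[of Y xs w p2 p1 m1 False] size_lo[OF ly w(1)] lx lw' p2TB less.prems(6) by simp
          then have "\<exists>g\<in>LOS ys YL YR. lwins TB g p2 False" using w(1) Y unfolding LOS_def by blast
          moreover have "(p2, False) \<in> LSt p2 m2 l1 r" using c 2 by (simp add: LSt_def)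
          ultimately have "\<exists>g\<in>LOS ys YL YR. \<exists>s\<in>LSt p2 m2 l1 r. lwins TB g (fst s) (snd s)" by (rule exI2)
          then show ?thesis using lw2 by simp
        next
          case d: 4
          have lw2: "\<not> lwin m2 l1 r" using d 2 by (simp add: lwin_def)
          have "\<not> lwin m1 l1 r" using d 2 by (simp add: lwin_def)
          then have A: "\<forall>g\<in>ROS xs YL YR. \<forall>s\<in>RSt p1 m1 l1 r. lwins TB g (fst s) (snd s)" using Hr[OF rp1] by simp
          then have A': "\<forall>g\<in>ROS xs YL YR. lwins TB g (p1 + r) True" using 2 d by (simp add: RSt_def)
          have pr: "PR xs (p1 + r) True ys (p2 + r) True" using vxy p12 unfolding PR_def by auto
          have side: "\<And>z. z \<in> ro ys \<Longrightarrow> PR xs p1 m1 z (p2 + r) True \<or> (\<exists>x'\<in>ro xs. PR x' (p1 + r) True z (p2 + r) True)"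
            using side_PR[OF lx ly vxy] p12 2 by simp
          have "\<forall>g\<in>ROS ys YL YR. lwins TB g (p2 + r) True" using RT[OF pr q2TB side A'] .
          moreover have "RSt p2 m2 l1 r = {(p2 + r, True)}" using 2 by (simp add: RSt_def)
          ultimately show ?thesis using lw2 by auto
        qed
      qed
    qed
  qed
  then show ?case using Y by simp
qed


lemma PL: "length xs \<le> 1 \<Longrightarrow> length ys \<le> 2 \<Longrightarrow> p2 \<le> TB \<Longrightarrow> PR xs p1 m1 ys p2 m2 \<Longrightarrow>
   lwins TB (gplus (ng xs) Y) p1 m1 \<Longrightarrow> lwins TB (gplus (ng ys) Y) p2 m2"
  using PL_aux by blast

lemma notW: "(\<not> W TB LS RS p mk) = (\<forall>l\<in>{0..p}. \<exists>r\<in>{0..TB - p}.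
     if lwin mk l r then (\<forall>g\<in>LS. \<forall>s\<in>LSt p mk l r. \<not> lwins TB g (fst s) (snd s))
     else (\<exists>g\<in>RS. \<exists>s\<in>RSt p mk l r. \<not> lwins TB g (fst s) (snd s)))"
  unfolding W_def by auto

definition DR :: "nat list \<Rightarrow> nat \<Rightarrow> bool \<Rightarrow> nat list \<Rightarrow> nat \<Rightarrow> bool \<Rightarrow> bool" where
  "DR xs ps ms ys pt mt = (v ys \<le> v xs \<and> pt \<le> ps \<and> (pt = ps \<longrightarrow> mt \<longrightarrow> ms) \<and>
      (ms \<and> \<not> mt \<longrightarrow> (\<exists>w\<in>ro ys. v w \<le> v xs)))"

lemma side_DR: "xs = [j] \<Longrightarrow> ys \<noteq> [] \<Longrightarrow> length ys \<le> 2 \<Longrightarrow> v ys \<le> v xs \<Longrightarrow> x' \<in> ro xs \<Longrightarrow>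
   q2 \<le> q1 \<Longrightarrow> (q2 = q1 \<longrightarrow> n2 \<longrightarrow> n1) \<Longrightarrow> \<not> (n1 \<and> \<not> n2) \<Longrightarrow> \<exists>z\<in>ro ys. DR x' q1 n1 z q2 n2"
  using NB[of xs j x' ys] unfolding DR_def by blast

lemma side_DL: "xs = [j] \<Longrightarrow> length ys \<le> 2 \<Longrightarrow> v ys \<le> v xs \<Longrightarrow> z \<in> lo ys \<Longrightarrow> z \<noteq> [] \<Longrightarrow>
   q2 \<le> ps \<Longrightarrow> (q2 = ps \<longrightarrow> n2 \<longrightarrow> ms) \<Longrightarrow> DR xs ps ms z q2 n2"
  using NC[of xs j ys z] lo_v[of z ys] unfolding DR_def by auto

lemma exI2R: "\<exists>g\<in>A. \<not> P g a b \<Longrightarrow> (a, b) \<in> S \<Longrightarrow> \<exists>g\<in>A. \<exists>s\<in>S. \<not> P g (fst s) (snd s)"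
  by force

lemma DL_aux:
  "size Y + size (ng xs) + size (ng ys) = N \<Longrightarrow> length xs \<le> 1 \<Longrightarrow> length ys \<le> 2 \<Longrightarrow> ps \<le> TB \<Longrightarrow>
   DR xs ps ms ys pt mt \<Longrightarrow> \<not> lwins TB (gplus (ng xs) Y) ps ms \<Longrightarrow> \<not> lwins TB (gplus (ng ys) Y) pt mt"
proof (induction N arbitrary: Y xs ys ps ms pt mt rule: less_induct)
  case (less N Y xs ys ps ms pt mt)
  have IH: "\<And>Y' xs' ys' q1 n1 q2 n2. size Y' + size (ng xs') + size (ng ys') < size Y + size (ng xs) + size (ng ys) \<Longrightarrow>
     length xs' \<le> 1 \<Longrightarrow> length ys' \<le> 2 \<Longrightarrow> q1 \<le> TB \<Longrightarrow> DR xs' q1 n1 ys' q2 n2 \<Longrightarrow>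
     \<not> lwins TB (gplus (ng xs') Y') q1 n1 \<Longrightarrow> \<not> lwins TB (gplus (ng ys') Y') q2 n2"
    using less.IH less.prems(1) by blast
  have lx: "length xs \<le> 1" and lx2: "length xs \<le> 2" and ly: "length ys \<le> 2" and psTB: "ps \<le> TB"
    using less.prems by auto
  have D: "DR xs ps ms ys pt mt" using less.prems by simp
  then have vxy: "v ys \<le> v xs" and pts: "pt \<le> ps" and c3: "pt = ps \<longrightarrow> mt \<longrightarrow> ms"
    and c4: "ms \<and> \<not> mt \<longrightarrow> (\<exists>w\<in>ro ys. v w \<le> v xs)" unfolding DR_def by auto
  show ?case
  proof (cases "ys = []")
    case True
    have pr: "PR [] pt mt xs ps ms" using D True v_nonneg[OF lx2] unfolding DR_def PR_def by auto
    have "lwins TB (gplus (ng []) Y) pt mt \<Longrightarrow> lwins TB (gplus (ng xs) Y) ps ms"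
      using PL[OF _ lx2 psTB pr] by simp
    then show ?thesis using less.prems(6) True by auto
  next
    case False
    have "0 < v ys" using v_pos[OF ly False] .
    then have "xs \<noteq> []" using vxy by auto
    then obtain j where xsj: "xs = [j]" using lx by (cases xs) auto
    obtain YL YR where Y: "Y = Game YL YR" by (cases Y)
    have src: "\<not> lwins TB (gplus (ng xs) (Game YL YR)) ps ms" using less.prems Y by simp
    have sizeYL: "\<And>y. y \<in> set YL \<Longrightarrow> size y < size Y" using Y size_opt_L by blast
    have sizeYR: "\<And>y. y \<in> set YR \<Longrightarrow> size y < size Y" using Y size_opt_R by blast

    have LT: "\<And>q1 n1 q2 n2. DR xs q1 n1 ys q2 n2 \<Longrightarrow> (n1 \<longrightarrow> n2) \<Longrightarrow> q1 \<le> TB \<Longrightarrow>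
        (\<And>z. z \<in> lo ys \<Longrightarrow> z \<noteq> [] \<Longrightarrow> DR xs ps ms z q2 n2) \<Longrightarrow>
        (\<forall>g\<in>LOS xs YL YR. \<not> lwins TB g q1 n1) \<Longrightarrow> (\<forall>g\<in>LOS ys YL YR. \<not> lwins TB g q2 n2)"
    proof -
      fix q1 n1 q2 n2
      assume dr: "DR xs q1 n1 ys q2 n2" and nn: "n1 \<longrightarrow> n2" and q1: "q1 \<le> TB"
        and stut: "\<And>z. z \<in> lo ys \<Longrightarrow> z \<noteq> [] \<Longrightarrow> DR xs ps ms z q2 n2"
        and all: "\<forall>g\<in>LOS xs YL YR. \<not> lwins TB g q1 n1"
      show "\<forall>g\<in>LOS ys YL YR. \<not> lwins TB g q2 n2"
      proof
        fix g assume "g \<in> LOS ys YL YR"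
        then show "\<not> lwins TB g q2 n2"
          unfolding LOS_def
        proof (elim UnE imageE)
          fix z assume z: "z \<in> lo ys" and gz: "g = gplus (ng z) (Game YL YR)"
          have lz: "length z \<le> 2" using lo_len[OF z ly] ly by simp
          have sz: "size (ng z) < size (ng ys)" using size_lo[OF ly z] .
          show ?thesis
          proof (cases "z = []")
            case True
            have s0: "size (ng []) < size (ng xs)" using size_lo[OF lx2, of "[]"] xsj by simp
            have "\<not> lwins TB (gplus (ng []) (Game YL YR)) q1 n1" using all xsj unfolding LOS_def by auto
            moreover have "DR [] q1 n1 [] q2 n2" using dr nn unfolding DR_def by auto
            ultimately show ?thesis using IH[of Y "[]" "[]" q1 n1 q2 n2] s0 sz True gz Y q1 by simp
          next
            case False
            show ?thesis using IH[of Y xs z ps ms q2 n2] stut[OF z False] sz lx lz psTB less.prems(6) gz Y by simp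
          qed
        next
          fix y assume y: "y \<in> set YL" and gy: "g = gplus (ng ys) y"
          have "\<not> lwins TB (gplus (ng xs) y) q1 n1" using all y unfolding LOS_def by auto
          then show ?thesis using IH[of y xs ys q1 n1 q2 n2] sizeYL[OF y] lx ly q1 dr gy by simp
        qed
      qed
    qed

    have RT: "\<And>q1 n1 q2 n2. DR xs q1 n1 ys q2 n2 \<Longrightarrow> q1 \<le> TB \<Longrightarrow> \<not> (n1 \<and> \<not> n2) \<Longrightarrow>
        (\<exists>g\<in>ROS xs YL YR. \<not> lwins TB g q1 n1) \<Longrightarrow> (\<exists>g\<in>ROS ys YL YR. \<not> lwins TB g q2 n2)"
    proof -
      fix q1 n1 q2 n2
      assume dr: "DR xs q1 n1 ys q2 n2" and q1: "q1 \<le> TB" and nn: "\<not> (n1 \<and> \<not> n2)"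
        and ex: "\<exists>g\<in>ROS xs YL YR. \<not> lwins TB g q1 n1"
      then obtain g where g: "g \<in> ROS xs YL YR" "\<not> lwins TB g q1 n1" by blast
      have q21: "q2 \<le> q1" "q2 = q1 \<longrightarrow> n2 \<longrightarrow> n1" using dr unfolding DR_def by auto
      from g(1)[unfolded ROS_def] show "\<exists>g\<in>ROS ys YL YR. \<not> lwins TB g q2 n2"
      proof (elim UnE imageE)
        fix x' assume x': "x' \<in> ro xs" and gx: "g = gplus (ng x') (Game YL YR)"
        obtain z where z: "z \<in> ro ys" "DR x' q1 n1 z q2 n2"
          using side_DR[OF xsj False ly vxy x' q21 nn] by blast
        have lz: "length z \<le> 2" using ro_len[OF z(1) ly] ly by simp
        have lx': "length x' \<le> 1" using ro_len[OF x' lx2] lx by simp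
        have "\<not> lwins TB (gplus (ng z) Y) q2 n2"
          using IH[of Y x' z q1 n1 q2 n2] size_ro[OF lx2 x'] size_ro[OF ly z(1)] lx' lz q1 z(2) g(2) gx Y by simp
        then show ?thesis using z(1) Y unfolding ROS_def by blast
      next
        fix y assume y: "y \<in> set YR" and gy: "g = gplus (ng xs) y"
        have "\<not> lwins TB (gplus (ng ys) y) q2 n2"
          using IH[of y xs ys q1 n1 q2 n2] sizeYR[OF y] lx ly q1 dr g(2) gy by simp
        then show ?thesis using y unfolding ROS_def by blast
      qed
    qed

    have H: "\<forall>l\<in>{0..ps}. \<exists>r\<in>{0..TB - ps}.
     if lwin ms l r then (\<forall>g\<in>LOS xs YL YR. \<forall>s\<in>LSt ps ms l r. \<not> lwins TB g (fst s) (snd s))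
     else (\<exists>g\<in>ROS xs YL YR. \<exists>s\<in>RSt ps ms l r. \<not> lwins TB g (fst s) (snd s))"
      using src unfolding lw_sum[OF lx2] notW .
    have "\<not> lwins TB (gplus (ng ys) (Game YL YR)) pt mt"
      unfolding lw_sum[OF ly] notW
    proof
      fix l assume "l \<in> {0..pt}"
      then have lpt: "l \<le> pt" by simp
      then have "l \<in> {0..ps}" using pts by simp
      from bspec[OF H this] obtain rs where rs0: "rs \<in> {0..TB - ps}" and
        Hs: "if lwin ms l rs then (\<forall>g\<in>LOS xs YL YR. \<forall>s\<in>LSt ps ms l rs. \<not> lwins TB g (fst s) (snd s))
          else (\<exists>g\<in>ROS xs YL YR. \<exists>s\<in>RSt ps ms l rs. \<not> lwins TB g (fst s) (snd s))" by (rule bexE)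
      have rs: "rs \<le> TB - ps" using rs0 by simp
      have rst: "rs \<le> TB - pt" using rs pts by simp
      have q1TB: "ps + rs \<le> TB" using rs psTB by simp
      show "\<exists>r\<in>{0..TB - pt}. if lwin mt l r then (\<forall>g\<in>LOS ys YL YR. \<forall>s\<in>LSt pt mt l r. \<not> lwins TB g (fst s) (snd s))
          else (\<exists>g\<in>ROS ys YL YR. \<exists>s\<in>RSt pt mt l r. \<not> lwins TB g (fst s) (snd s))"
      proof (cases "ms = mt")
        case True
        show ?thesis
        proof (rule bexI[of _ rs])
          show "rs \<in> {0..TB - pt}" using rst by simp
          show "if lwin mt l rs then (\<forall>g\<in>LOS ys YL YR. \<forall>s\<in>LSt pt mt l rs. \<not> lwins TB g (fst s) (snd s))
            else (\<exists>g\<in>ROS ys YL YR. \<exists>s\<in>RSt pt mt l rs. \<not> lwins TB g (fst s) (snd s))"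
          proof (cases "lwin mt l rs")
            case lw: True
            have A: "\<forall>g\<in>LOS xs YL YR. \<forall>s\<in>LSt ps ms l rs. \<not> lwins TB g (fst s) (snd s)" using Hs lw True by simp
            have "\<forall>g\<in>LOS ys YL YR. \<forall>s\<in>LSt pt mt l rs. \<not> lwins TB g (fst s) (snd s)"
            proof (intro ballI)
              fix g s assume g: "g \<in> LOS ys YL YR" and s: "s \<in> LSt pt mt l rs"
              obtain n where sn: "s = (pt - l, n)" and s1: "(ps - l, n) \<in> LSt ps ms l rs" and nl: "n \<longrightarrow> 0 < l"
                using s True by (auto simp: LSt_def split: if_splits)
              have dr: "DR xs (ps - l) n ys (pt - l) n" using vxy pts lpt unfolding DR_def by auto
              have A': "\<forall>g\<in>LOS xs YL YR. \<not> lwins TB g (ps - l) n" using A s1 by fastforce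
              have q2a: "pt - l \<le> ps" using pts by simp
              have q2b: "pt - l = ps \<longrightarrow> n \<longrightarrow> ms" using pts lpt nl by auto
              have stut: "\<And>z. z \<in> lo ys \<Longrightarrow> z \<noteq> [] \<Longrightarrow> DR xs ps ms z (pt - l) n"
                using side_DL[OF xsj ly vxy _ _ q2a q2b] by blast
              have "\<forall>g\<in>LOS ys YL YR. \<not> lwins TB g (pt - l) n" by (rule LT[OF dr _ _ stut A']) (use psTB in auto)
              then show "\<not> lwins TB g (fst s) (snd s)" using g sn by auto
            qed
            then show ?thesis using lw by simp
          next
            case rw: False
            have "\<exists>g\<in>ROS xs YL YR. \<exists>s\<in>RSt ps ms l rs. \<not> lwins TB g (fst s) (snd s)" using Hs rw True by simp
            then obtain g s where g: "g \<in> ROS xs YL YR" "s \<in> RSt ps ms l rs" "\<not> lwins TB g (fst s) (snd s)" by blast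
            obtain n where sn: "s = (ps + rs, n)" and s2: "(pt + rs, n) \<in> RSt pt mt l rs"
              using g(2) True by (auto simp: RSt_def split: if_splits)
            have dr: "DR xs (ps + rs) n ys (pt + rs) n" using vxy pts unfolding DR_def by auto
            have E: "\<exists>g\<in>ROS xs YL YR. \<not> lwins TB g (ps + rs) n" using g(1,3) sn by auto
            have "\<exists>g\<in>ROS ys YL YR. \<not> lwins TB g (pt + rs) n" by (rule RT[OF dr q1TB _ E]) simp
            then have "\<exists>g\<in>ROS ys YL YR. \<exists>s\<in>RSt pt mt l rs. \<not> lwins TB g (fst s) (snd s)" using s2 by (rule exI2R)
            then show ?thesis using rw by simp
          qed
        qed
      next
        case False
        then consider "ms" "\<not> mt" | "\<not> ms" "mt" by auto
        then show ?thesis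
        proof cases
          case 1
          obtain w where w: "w \<in> ro ys" "v w \<le> v xs" using c4 1 by auto
          consider "rs < l" | "rs = l" "0 < l" | "rs = l" "l = 0" | "l < rs" by linarith
          then show ?thesis
          proof cases
            case a: 1
            have "lwin ms l rs" using a 1 by (simp add: lwin_def)
            then have A: "\<forall>g\<in>LOS xs YL YR. \<not> lwins TB g (ps - l) False" using Hs 1 a by (simp add: LSt_def)
            have lw2: "lwin mt l rs" using a 1 by (simp add: lwin_def)
            have dr: "DR xs (ps - l) False ys (pt - l) False" using vxy pts lpt unfolding DR_def by auto
            have q2a: "pt - l \<le> ps" using pts by simp
            have q2b: "pt - l = ps \<longrightarrow> False \<longrightarrow> ms" by simp
            have stut: "\<And>z. z \<in> lo ys \<Longrightarrow> z \<noteq> [] \<Longrightarrow> DR xs ps ms z (pt - l) False"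
              using side_DL[OF xsj ly vxy _ _ q2a q2b] by blast
            have "\<forall>g\<in>LOS ys YL YR. \<not> lwins TB g (pt - l) False" by (rule LT[OF dr _ _ stut A]) (use psTB in auto)
            moreover have "LSt pt mt l rs = {(pt - l, False)}" using 1 by (simp add: LSt_def)
            ultimately show ?thesis by (intro bexI[of _ rs]) (use lw2 rst in auto)
          next
            case b: 2
            have "lwin ms l rs" using b 1 by (simp add: lwin_def)
            then have A: "\<forall>g\<in>LOS xs YL YR. \<not> lwins TB g (ps - l) False" using Hs 1 b by (simp add: LSt_def)
            have lw2: "lwin mt l (l - 1)" using b 1 by (simp add: lwin_def)
            have dr: "DR xs (ps - l) False ys (pt - l) False" using vxy pts lpt unfolding DR_def by auto
            have q2a: "pt - l \<le> ps" using pts by simp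
            have q2b: "pt - l = ps \<longrightarrow> False \<longrightarrow> ms" by simp
            have stut: "\<And>z. z \<in> lo ys \<Longrightarrow> z \<noteq> [] \<Longrightarrow> DR xs ps ms z (pt - l) False"
              using side_DL[OF xsj ly vxy _ _ q2a q2b] by blast
            have "\<forall>g\<in>LOS ys YL YR. \<not> lwins TB g (pt - l) False" by (rule LT[OF dr _ _ stut A]) (use psTB in auto)
            moreover have "LSt pt mt l (l - 1) = {(pt - l, False)}" using 1 by (simp add: LSt_def)
            moreover have "l - 1 \<le> TB - pt" using b rst by simp
            ultimately show ?thesis by (intro bexI[of _ "l - 1"]) (use lw2 in auto)
          next
            case c: 3
            have lw2: "\<not> lwin mt 0 0" using 1 by (simp add: lwin_def)
            have lw': "length w \<le> 2" using ro_len[OF w(1) ly] ly by simp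
            have "DR xs ps ms w pt True" using w(2) pts 1 unfolding DR_def by auto
            then have "\<not> lwins TB (gplus (ng w) Y) pt True"
              using IH[of Y xs w ps ms pt True] size_ro[OF ly w(1)] lx lw' psTB less.prems(6) by simp
            then have "\<exists>g\<in>ROS ys YL YR. \<not> lwins TB g pt True" using w(1) Y unfolding ROS_def by blast
            moreover have "(pt, True) \<in> RSt pt mt 0 0" using 1 by (simp add: RSt_def)
            ultimately have "\<exists>g\<in>ROS ys YL YR. \<exists>s\<in>RSt pt mt 0 0. \<not> lwins TB g (fst s) (snd s)" by (rule exI2R)
            then show ?thesis using c by (intro bexI[of _ 0]) (use lw2 in auto)
          next
            case d: 4
            have "\<not> lwin ms l rs" using d 1 by (simp add: lwin_def)
            then have E: "\<exists>g\<in>ROS xs YL YR. \<not> lwins TB g (ps + rs) True" using Hs 1 by (simp add: RSt_def)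
            have lw2: "\<not> lwin mt l rs" using d 1 by (simp add: lwin_def)
            have dr: "DR xs (ps + rs) True ys (pt + rs) True" using vxy pts unfolding DR_def by auto
            have "\<exists>g\<in>ROS ys YL YR. \<not> lwins TB g (pt + rs) True" by (rule RT[OF dr q1TB _ E]) simp
            moreover have "(pt + rs, True) \<in> RSt pt mt l rs" using 1 d by (simp add: RSt_def)
            ultimately have "\<exists>g\<in>ROS ys YL YR. \<exists>s\<in>RSt pt mt l rs. \<not> lwins TB g (fst s) (snd s)" by (rule exI2R)
            then show ?thesis by (intro bexI[of _ rs]) (use lw2 rst in auto)
          qed
        next
          case 2
          have ptps: "pt < ps" using c3 2 pts by auto
          consider "rs < l" | "rs = l" | "l < rs" by linarith
          then show ?thesis
          proof cases
            case a: 1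
            have "lwin ms l rs" using a 2 by (simp add: lwin_def)
            then have A: "\<forall>g\<in>LOS xs YL YR. \<not> lwins TB g (ps - l) False" using Hs 2 a by (simp add: LSt_def)
            have lw2: "lwin mt l rs" using a 2 by (simp add: lwin_def)
            have B: "\<forall>g\<in>LOS ys YL YR. \<not> lwins TB g (pt - l) n" for n
            proof -
              have dr: "DR xs (ps - l) False ys (pt - l) n" using vxy pts lpt ptps unfolding DR_def by auto
              have q2a: "pt - l \<le> ps" using pts by simp
              have q2b: "pt - l = ps \<longrightarrow> n \<longrightarrow> ms" using ptps lpt by auto
              have stut: "\<And>z. z \<in> lo ys \<Longrightarrow> z \<noteq> [] \<Longrightarrow> DR xs ps ms z (pt - l) n"
                using side_DL[OF xsj ly vxy _ _ q2a q2b] by blast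
              show ?thesis by (rule LT[OF dr _ _ stut A]) (use psTB in auto)
            qed
            have "\<forall>g\<in>LOS ys YL YR. \<forall>s\<in>LSt pt mt l rs. \<not> lwins TB g (fst s) (snd s)"
              using B by (auto simp: LSt_def)
            then show ?thesis by (intro bexI[of _ rs]) (use lw2 rst in auto)
          next
            case b: 2
            have "\<not> lwin ms l rs" using b 2 by (simp add: lwin_def)
            then have E: "\<exists>g\<in>ROS xs YL YR. \<not> lwins TB g (ps + l) True" using Hs 2 b by (simp add: RSt_def)
            have r1: "l + 1 \<le> TB - pt" using b rs ptps psTB by arith
            have lw2: "\<not> lwin mt l (l + 1)" using 2 by (simp add: lwin_def)
            have dr: "DR xs (ps + l) True ys (pt + (l + 1)) True" using vxy ptps unfolding DR_def by auto
            have "ps + l \<le> TB" using b q1TB by simp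
            then have "\<exists>g\<in>ROS ys YL YR. \<not> lwins TB g (pt + (l + 1)) True" using RT[OF dr _ _ E] by simp
            moreover have "(pt + (l + 1), True) \<in> RSt pt mt l (l + 1)" using 2 by (simp add: RSt_def)
            ultimately have "\<exists>g\<in>ROS ys YL YR. \<exists>s\<in>RSt pt mt l (l + 1). \<not> lwins TB g (fst s) (snd s)" by (rule exI2R)
            then show ?thesis by (intro bexI[of _ "l + 1"]) (use lw2 r1 in auto)
          next
            case c: 3
            have "\<not> lwin ms l rs" using c 2 by (simp add: lwin_def)
            then have "\<exists>g\<in>ROS xs YL YR. \<exists>s\<in>RSt ps ms l rs. \<not> lwins TB g (fst s) (snd s)" using Hs by simp
            then obtain g s where g: "g \<in> ROS xs YL YR" "s \<in> RSt ps ms l rs" "\<not> lwins TB g (fst s) (snd s)" by blast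
            obtain n where sn: "s = (ps + rs, n)" using g(2) by (auto simp: RSt_def split: if_splits)
            have E: "\<exists>g\<in>ROS xs YL YR. \<not> lwins TB g (ps + rs) n" using g(1,3) sn by auto
            have lw2: "\<not> lwin mt l rs" using c 2 by (simp add: lwin_def)
            have dr: "DR xs (ps + rs) n ys (pt + rs) True" using vxy ptps unfolding DR_def by auto
            have "\<exists>g\<in>ROS ys YL YR. \<not> lwins TB g (pt + rs) True" by (rule RT[OF dr q1TB _ E]) simp
            moreover have "(pt + rs, True) \<in> RSt pt mt l rs" using 2 by (simp add: RSt_def)
            ultimately have "\<exists>g\<in>ROS ys YL YR. \<exists>s\<in>RSt pt mt l rs. \<not> lwins TB g (fst s) (snd s)" by (rule exI2R)
            then show ?thesis by (intro bexI[of _ rs]) (use lw2 rst in auto)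
          qed
        qed
      qed
    qed
    then show ?thesis using Y by simp
  qed
qed


lemma DL: "length xs \<le> 1 \<Longrightarrow> length ys \<le> 2 \<Longrightarrow> ps \<le> TB \<Longrightarrow> DR xs ps ms ys pt mt \<Longrightarrow>
   lwins TB (gplus (ng ys) Y) pt mt \<Longrightarrow> lwins TB (gplus (ng xs) Y) ps ms"
  using DL_aux by blast

theorem mainTheorem18:
  fixes TB k :: nat
  assumes "k \<ge> 1"
  shows "game_eq TB (gplus (dy k) (dy k)) (dy (k - 1))"
proof -
  have vv: "v [k - 1] = v [k, k]" using hp_pred[OF assms] by simp
  have A: "lwins TB (gplus (gplus (dy k) (dy k)) X) p mk"
    if "p \<le> TB" "lwins TB (gplus (dy (k - 1)) X) p mk" for X p mk
  proof -
    have "PR [k - 1] p mk [k, k] p mk" using vv unfolding PR_def by simp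
    then show ?thesis using PL[of "[k - 1]" "[k, k]" p TB p mk mk X] that by simp
  qed
  have B: "lwins TB (gplus (dy (k - 1)) X) p mk"
    if "p \<le> TB" "lwins TB (gplus (gplus (dy k) (dy k)) X) p mk" for X p mk
  proof -
    have "DR [k - 1] p mk [k, k] p mk" using vv unfolding DR_def by simp
    then show ?thesis using DL[of "[k - 1]" "[k, k]" p TB mk p mk X] that by simp
  qed
  show ?thesis
    unfolding game_eq_def game_ge_def outc_def less_eq_outcome_def
    using A B by auto
qed

end
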